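(* For every nonzero $(x_1,x_2)\in\mathbb R^2$ and nonzero $(y_1,y_2,y_3)\in\mathbb R^3$, the equations \begin{align*} de^1 &=( x_2 y_1- x_1 y_2)e^{35}- x_1y_3(e^{36}+e^{45})- x_2 y_3 e^{46},\\ de^3 &= -( x_2 y_1- x_1 y_2)e^{15}+ x_1 y_3(e^{16}+e^{25})+ x_2 y_3 e^{26},\\ de^5 &= ( x_2 y_1- x_1 y_2)e^{13}- x_1y_3(e^{14}+e^{23})- x_2 y_3 e^{24},\\ de^2 &= x_1y_1 e^{35} -( x_1 y_3- y_2 x_2)e^{46}+ x_2y_1(e^{36}+e^{45}), \\ de^4 &= - x_1 y_1e^{15} +( x_1 y_3- y_2 x_2)e^{26}- x_2 y_1(e^{16}+e^{25}),\\ de^6 &= x_1 y_1e^{13} - ( x_1 y_3- y_2 x_2)e^{24}+ x_2 y_1(e^{14}+e^{23}) \end{align*} define a non-Abelian Lie algebra $\mathfrak g$ with basis $e^1,\dots,e^6$ of $\mathfrak g^*$, and, modulo rescaling of the metric, each point of $\mathcal M\cong\mathbb{RP}^1\times\mathbb{RP}^2$ (represented by the formal product $(x_1u_1+x_2u_2)\cdot(y_1u_1^2+y_2u_1u_2+y_3u_2^2)$) corresponds in this way to an $SO(3)$-structure with invariant intrinsic torsion on a non-Abelian Lie algebra. In addition, the flat connection associated with the coframe has invariant torsion, and the intrinsic torsion is represented by the expanded product \[ x_1y_1u_1^3+(x_1y_2+x_2y_1)u_1^2u_2 + (x_1y_3+x_2y_2)u_1u_2^2+x_2y_3u_2^3.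 \] In particular, the intrinsic torsion determines a surjective $PSL(2,\mathbb R)$-equivariant map $\mathbb{RP}^1\times \mathbb{RP}^2\to \mathbb{RP}^3$, induced by polynomial multiplication.
   Context: $e^{ij}=e^i\wedge e^j$. Let $\sigma=e^{12}+e^{34}+e^{56}$, $\eta^\theta=(\cos\theta\, e^1+\sin\theta\, e^2)\wedge(\cos\theta\, e^3+\sin\theta\, e^4)\wedge(\cos\theta\, e^5+\sin\theta\, e^6)$, $\eta_0=\eta^0$, $\eta_1=\eta^{2\pi/3}$, $\eta_2=\eta^{-2\pi/3}$; the common stabilizer of these forms in $GL(6,\mathbb R)$ is a copy of $SO(3)$, and a coframe $e^1,\dots,e^6$ of a Lie algebra (a basis of $\mathfrak g^*$, the structure given by $d:\mathfrak g^*\to\Lambda^2\mathfrak g^*$) defines a left-invariant $SO(3)$-structure, with metric $\sum (e^i)^2$. Put $\gamma=\tfrac43(\eta_0+\eta_1+\eta_2)$, $\hat\gamma=J\gamma$ ($J$ the almost complex structure for which $\gamma+i\hat\gamma$ has type $(3,0)$). The intrinsic torsion of an $SO(3)$-structure is the projection of the torsion of any connection on the reduction to the cokernel of $T^*\otimes\mathfrak{so}(3)\to\Lambda^2T^*\otimes T$; it is invariant if it lies in the 4-dimensional $SO(3)$-invariant part. Then there are $\lambda_1,\dots,\lambda_4$ with $d\eta_0=-\tfrac12\lambda_4\sigma^2$, $d\eta_1=\tfrac1{16}(3\sqrt3\lambda_1+3\lambda_2+\sqrt3\lambda_3+\lambda_4)\sigma^2$, $d\eta_2=-\tfrac1{16}(3\sqrt3\lambda_1-3\lambda_2+\sqrt3\lambda_3-\lambda_4)\sigma^2$,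 $d\hat\gamma=\tfrac12(\lambda_3-\lambda_1)\sigma^2$, $d\sigma=\tfrac34(\lambda_1-\lambda_3)\gamma+\tfrac34(\lambda_2-\lambda_4)\hat\gamma+\tfrac14(\lambda_2+3\lambda_4)(e^{235}+e^{145}+e^{136}+3e^{246})+\tfrac14(3\lambda_1+\lambda_3)(e^{245}+e^{146}+e^{236}+3e^{135})$; the intrinsic torsion is represented by the cubic $\lambda_1u_1^3+\lambda_2u_1^2u_2+\lambda_3u_1u_2^2+\lambda_4u_2^3$ in variables $u_1,u_2$ (the centralizer $GL(2,\mathbb R)$ of $SO(3)$ acts on $\mathrm{span}(e^1,e^2)\cong\mathrm{span}(u_1,u_2)$, and likewise on each $\mathrm{span}(e^{2i-1},e^{2i})$). $\mathbb{RP}^k$ is the projectivization of the space of degree-$k$ homogeneous polynomials in $u_1,u_2$. The invariant torsion variety is $\mathcal M=\{[\lambda_1:\dots:\lambda_4:\mu_1:\mu_2]\in\mathbb{RP}^5\mid\operatorname{rank}\begin{pmatrix} -\tfrac23\lambda_2+\tfrac12\mu_1 & -\tfrac13\lambda_3+\tfrac12\mu_2 & \lambda_1 \\ -\tfrac23\lambda_3-\tfrac12\mu_2 &- \lambda_4 & \tfrac13\lambda_2+\tfrac12\mu_1\end{pmatrix}=1\}$, identified with $\mathbb{RP}^1\times\mathbb{RP}^2$ via $([x_1u_1+x_2u_2],[y_1u_1^2+y_2u_1u_2+y_3u_2^2])\mapsto[x_1y_1:x_1y_2+x_2y_1:x_1y_3+x_2y_2:x_2y_3:\tfrac23(2x_2y_1-x_1y_2):\tfrac23(x_2y_2-2x_1y_3)]$.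 *)

theory Defs
  imports "HOL-Analysis.Analysis"
begin

text \<open>Vectors of the 6-dimensional Lie algebra g = R^6, with standard basis e_1..e_6 indexed
  by the numeral type 6 (the numerals 1,...,6 of type 6 are its six distinct elements).
  Forms are represented as alternating multilinear functions (determinant convention,
  i.e. e^{i j}(e_i,e_j) = 1).\<close>

type_synonym vec6 = "real^6"
type_synonym form1 = "vec6 \<Rightarrow> real"
type_synonym form2 = "vec6 \<Rightarrow> vec6 \<Rightarrow> real"
type_synonym form3 = "vec6 \<Rightarrow> vec6 \<Rightarrow> vec6 \<Rightarrow> real"
type_synonym form4 = "vec6 \<Rightarrow> vec6 \<Rightarrow> vec6 \<Rightarrow> vec6 \<Rightarrow> real"

definition cof :: "6 \<Rightarrow> form1" where
  "cof i X = X $ i"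

definition wedge2 :: "form1 \<Rightarrow> form1 \<Rightarrow> form2" where
  "wedge2 a b X Y = a X * b Y - a Y * b X"

definition wedge3 :: "form1 \<Rightarrow> form1 \<Rightarrow> form1 \<Rightarrow> form3" where
  "wedge3 a b c X Y Z =
     a X * (b Y * c Z - b Z * c Y) - a Y * (b X * c Z - b Z * c X) + a Z * (b X * c Y - b Y * c X)"

definition e2 :: "6 \<Rightarrow> 6 \<Rightarrow> form2" where
  "e2 i j = wedge2 (cof i) (cof j)"

definition e3 :: "6 \<Rightarrow> 6 \<Rightarrow> 6 \<Rightarrow> form3" where
  "e3 i j k = wedge3 (cof i) (cof j) (cof k)"

definition struct_d :: "real \<Rightarrow> real \<Rightarrow> real \<Rightarrow> real \<Rightarrow> real \<Rightarrow> 6 \<Rightarrow> form2" where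
  "struct_d x1 x2 y1 y2 y3 k X Y =
    (if k = 1 then (x2*y1 - x1*y2) * e2 3 5 X Y - x1*y3 * (e2 3 6 X Y + e2 4 5 X Y) - x2*y3 * e2 4 6 X Y
     else if k = 3 then - (x2*y1 - x1*y2) * e2 1 5 X Y + x1*y3 * (e2 1 6 X Y + e2 2 5 X Y) + x2*y3 * e2 2 6 X Y
     else if k = 5 then (x2*y1 - x1*y2) * e2 1 3 X Y - x1*y3 * (e2 1 4 X Y + e2 2 3 X Y) - x2*y3 * e2 2 4 X Y
     else if k = 2 then x1*y1 * e2 3 5 X Y - (x1*y3 - y2*x2) * e2 4 6 X Y + x2*y1 * (e2 3 6 X Y + e2 4 5 X Y)
     else if k = 4 then - x1*y1 * e2 1 5 X Y + (x1*y3 - y2*x2) * e2 2 6 X Y - x2*y1 * (e2 1 6 X Y + e2 2 5 X Y)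
     else x1*y1 * e2 1 3 X Y - (x1*y3 - y2*x2) * e2 2 4 X Y + x2*y1 * (e2 1 4 X Y + e2 2 3 X Y))"

text \<open>The bracket on g determined by prescribed differentials of the coframe, via the
  Chevalley--Eilenberg convention  de^k(X,Y) = - e^k([X,Y]).\<close>
definition bracket_of :: "(6 \<Rightarrow> form2) \<Rightarrow> vec6 \<Rightarrow> vec6 \<Rightarrow> vec6" where
  "bracket_of D X Y = (\<chi> k. - D k X Y)"

definition is_lie_bracket :: "(vec6 \<Rightarrow> vec6 \<Rightarrow> vec6) \<Rightarrow> bool" where
  "is_lie_bracket B \<longleftrightarrow> bilinear B \<and> (\<forall>X. B X X = 0) \<and>
     (\<forall>X Y Z. B X (B Y Z) + B Y (B Z X) + B Z (B X Y) = 0)"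

definition non_abelian :: "(vec6 \<Rightarrow> vec6 \<Rightarrow> vec6) \<Rightarrow> bool" where
  "non_abelian B \<longleftrightarrow> (\<exists>X Y. B X Y \<noteq> 0)"

text \<open>Exterior derivative of left-invariant forms (Chevalley--Eilenberg formula).\<close>
definition d1 :: "(vec6 \<Rightarrow> vec6 \<Rightarrow> vec6) \<Rightarrow> form1 \<Rightarrow> form2" where
  "d1 B a X Y = - a (B X Y)"

definition d2 :: "(vec6 \<Rightarrow> vec6 \<Rightarrow> vec6) \<Rightarrow> form2 \<Rightarrow> form3" where
  "d2 B w X Y Z = - w (B X Y) Z + w (B X Z) Y - w (B Y Z) X"

definition d3 :: "(vec6 \<Rightarrow> vec6 \<Rightarrow> vec6) \<Rightarrow> form3 \<Rightarrow> form4" where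
  "d3 B p X0 X1 X2 X3 =
     - p (B X0 X1) X2 X3 + p (B X0 X2) X1 X3 - p (B X0 X3) X1 X2
     - p (B X1 X2) X0 X3 + p (B X1 X3) X0 X2 - p (B X2 X3) X0 X1"

definition sigma :: form2 where
  "sigma X Y = e2 1 2 X Y + e2 3 4 X Y + e2 5 6 X Y"

definition eta :: "real \<Rightarrow> form3" where
  "eta \<theta> = wedge3 (\<lambda>X. cos \<theta> * cof 1 X + sin \<theta> * cof 2 X)
                    (\<lambda>X. cos \<theta> * cof 3 X + sin \<theta> * cof 4 X)
                    (\<lambda>X. cos \<theta> * cof 5 X + sin \<theta> * cof 6 X)"

definition eta0 :: form3 where "eta0 = eta 0"
definition eta1 :: form3 where "eta1 = eta (2*pi/3)"
definition eta2 :: form3 where "eta2 = eta (-(2*pi/3))"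

definition sigma_sq :: form4 where
  "sigma_sq X Y Z W = 2 * (sigma X Y * sigma Z W - sigma X Z * sigma Y W + sigma X W * sigma Y Z)"

definition gamma :: form3 where
  "gamma X Y Z = 4/3 * (eta0 X Y Z + eta1 X Y Z + eta2 X Y Z)"

text \<open>The almost complex structure J compatible with the metric and sigma
  (sigma(X,Y) = <JX,Y>): J e_1 = e_2, J e_2 = -e_1, etc.  Its action on a 3-form of type
  (3,0)+(0,3) is phi |-> phi(J.,J.,J.), so that gamma + i*gammahat has type (3,0).\<close>
definition Jmat :: "real^6^6" where
  "Jmat = (\<chi> i j. if (i = 2 \<and> j = 1) \<or> (i = 4 \<and> j = 3) \<or> (i = 6 \<and> j = 5) then 1
                   else if (i = 1 \<and> j = 2) \<or> (i = 3 \<and> j = 4) \<or> (i = 5 \<and> j = 6) then -1 else 0)"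

definition gammahat :: form3 where
  "gammahat X Y Z = gamma (Jmat *v X) (Jmat *v Y) (Jmat *v Z)"

definition SO3 :: "(real^6^6) set" where
  "SO3 = {g. invertible g \<and>
     (\<forall>X Y. sigma (g *v X) (g *v Y) = sigma X Y) \<and>
     (\<forall>p \<in> {eta0, eta1, eta2}. \<forall>X Y Z. p (g *v X) (g *v Y) (g *v Z) = p X Y Z)}"

definition so3 :: "(real^6^6) set" where
  "so3 = {A. (\<forall>X Y. sigma (A *v X) Y + sigma X (A *v Y) = 0) \<and>
     (\<forall>p \<in> {eta0, eta1, eta2}. \<forall>X Y Z. p (A *v X) Y Z + p X (A *v Y) Z + p X Y (A *v Z) = 0)}"

type_synonym tensor = "vec6 \<Rightarrow> vec6 \<Rightarrow> vec6"  \<comment> \<open>elements of \<Lambda>^2 T* \<otimes> T\<close>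

text \<open>Image of the map T* \<otimes> so(3) \<rightarrow> \<Lambda>^2 T* \<otimes> T, alpha |-> ((X,Y) |-> alpha_X Y - alpha_Y X).\<close>
definition delta_image :: "tensor set" where
  "delta_image = {T. \<exists>\<alpha> :: vec6 \<Rightarrow> real^6^6. linear \<alpha> \<and> (\<forall>X. \<alpha> X \<in> so3) \<and>
                        (\<forall>X Y. T X Y = \<alpha> X *v Y - \<alpha> Y *v X)}"

text \<open>Torsion of the flat connection for which the coframe is parallel:
  T(X,Y) = nabla_X Y - nabla_Y X - [X,Y] = -[X,Y] on left-invariant fields.
  This connection preserves the SO(3)-structure (it is a connection on the reduction).\<close>
definition flat_torsion :: "(vec6 \<Rightarrow> vec6 \<Rightarrow> vec6) \<Rightarrow> tensor" where
  "flat_torsion B X Y = - B X Y"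

definition act_tensor :: "real^6^6 \<Rightarrow> tensor \<Rightarrow> tensor" where
  "act_tensor g T X Y = g *v T (matrix_inv g *v X) (matrix_inv g *v Y)"

definition SO3_invariant_tensor :: "tensor \<Rightarrow> bool" where
  "SO3_invariant_tensor T \<longleftrightarrow> (\<forall>g \<in> SO3. act_tensor g T = T)"

text \<open>The intrinsic torsion (class of the torsion of a connection on the reduction in the
  cokernel of delta) is invariant: its class is fixed by SO(3).\<close>
definition intrinsic_torsion_invariant :: "(vec6 \<Rightarrow> vec6 \<Rightarrow> vec6) \<Rightarrow> bool" where
  "intrinsic_torsion_invariant B \<longleftrightarrow>
     (\<forall>g \<in> SO3. (\<lambda>X Y. act_tensor g (flat_torsion B) X Y - flat_torsion B X Y) \<in> delta_image)"

text \<open>The invariant intrinsic torsion is represented by the cubic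
  l1 u1^3 + l2 u1^2 u2 + l3 u1 u2^2 + l4 u2^3, via the identification of the paper.\<close>
definition torsion_cubic :: "(vec6 \<Rightarrow> vec6 \<Rightarrow> vec6) \<Rightarrow> real \<Rightarrow> real \<Rightarrow> real \<Rightarrow> real \<Rightarrow> bool" where
  "torsion_cubic B l1 l2 l3 l4 \<longleftrightarrow>
     d3 B eta0 = (\<lambda>X Y Z W. - 1/2 * l4 * sigma_sq X Y Z W) \<and>
     d3 B eta1 = (\<lambda>X Y Z W. 1/16 * (3 * sqrt 3 * l1 + 3 * l2 + sqrt 3 * l3 + l4) * sigma_sq X Y Z W) \<and>
     d3 B eta2 = (\<lambda>X Y Z W. - 1/16 * (3 * sqrt 3 * l1 - 3 * l2 + sqrt 3 * l3 - l4) * sigma_sq X Y Z W) \<and>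
     d3 B gammahat = (\<lambda>X Y Z W. 1/2 * (l3 - l1) * sigma_sq X Y Z W) \<and>
     d2 B sigma = (\<lambda>X Y Z. 3/4 * (l1 - l3) * gamma X Y Z + 3/4 * (l2 - l4) * gammahat X Y Z
        + 1/4 * (l2 + 3 * l4) * (e3 2 3 5 X Y Z + e3 1 4 5 X Y Z + e3 1 3 6 X Y Z + 3 * e3 2 4 6 X Y Z)
        + 1/4 * (3 * l1 + l3) * (e3 2 4 5 X Y Z + e3 1 4 6 X Y Z + e3 2 3 6 X Y Z + 3 * e3 1 3 5 X Y Z))"

definition lin_form :: "real \<Rightarrow> real \<Rightarrow> real \<Rightarrow> real \<Rightarrow> real" where
  "lin_form x1 x2 u1 u2 = x1 * u1 + x2 * u2"
definition quad_form :: "real \<Rightarrow> real \<Rightarrow> real \<Rightarrow> real \<Rightarrow> real \<Rightarrow> real" where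
  "quad_form y1 y2 y3 u1 u2 = y1 * u1^2 + y2 * u1 * u2 + y3 * u2^2"
definition cubic_form :: "real \<Rightarrow> real \<Rightarrow> real \<Rightarrow> real \<Rightarrow> real \<Rightarrow> real \<Rightarrow> real" where
  "cubic_form l1 l2 l3 l4 u1 u2 = l1 * u1^3 + l2 * u1^2 * u2 + l3 * u1 * u2^2 + l4 * u2^3"

definition prod_coeffs :: "real \<Rightarrow> real \<Rightarrow> real \<Rightarrow> real \<Rightarrow> real \<Rightarrow> real \<times> real \<times> real \<times> real" where
  "prod_coeffs x1 x2 y1 y2 y3 = (x1*y1, x1*y2 + x2*y1, x1*y3 + x2*y2, x2*y3)"

end

theory Submission imports Defs begin
lemma exhaust_6: fixes x :: 6 shows "x = 1 \<or> x = 2 \<or> x = 3 \<or> x = 4 \<or> x = 5 \<or> x = 6"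
proof (induct x)
  case (of_int z)
  then have "z = 0 \<or> z = 1 \<or> z = 2 \<or> z = 3 \<or> z = 4 \<or> z = 5" by fastforce
  then show ?case by auto
qed
lemma forall_6: "(\<forall>i::6. P i) \<longleftrightarrow> P 1 \<and> P 2 \<and> P 3 \<and> P 4 \<and> P 5 \<and> P 6"
  by (metis exhaust_6)
lemma UNIV_6: "(UNIV::6 set) = {1,2,3,4,5,6}" using exhaust_6 by auto
lemma sum_6: "sum f (UNIV::6 set) = f 1 + f 2 + f 3 + f 4 + f 5 + f 6"
  unfolding UNIV_6 by (simp add: ac_simps)

lemmas SD = struct_d_def e2_def wedge2_def cof_def bracket_of_def


definition E3 :: "6 \<Rightarrow> 6 \<Rightarrow> 6 \<Rightarrow> vec6 \<Rightarrow> vec6 \<Rightarrow> vec6 \<Rightarrow> real" where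
  "E3 i j k X Y Z = X$i * (Y$j * Z$k - Z$j * Y$k) - Y$i * (X$j * Z$k - Z$j * X$k) + Z$i * (X$j * Y$k - Y$j * X$k)"

definition S0f :: form3 where "S0f X Y Z = E3 1 3 5 X Y Z"
definition S1f :: form3 where "S1f X Y Z = E3 1 3 6 X Y Z + E3 1 4 5 X Y Z + E3 2 3 5 X Y Z"
definition S2f :: form3 where "S2f X Y Z = E3 1 4 6 X Y Z + E3 2 3 6 X Y Z + E3 2 4 5 X Y Z"
definition S3f :: form3 where "S3f X Y Z = E3 2 4 6 X Y Z"

lemma sin_120: "sin (2*pi/3) = sqrt 3/2"
  by (metis sin_120' mult.commute)

lemma eta_expand: "eta t X Y Z = cos t ^ 3 * S0f X Y Z + cos t ^ 2 * sin t * S1f X Y Z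
   + cos t * sin t ^ 2 * S2f X Y Z + sin t ^ 3 * S3f X Y Z"
  unfolding eta_def wedge3_def S0f_def S1f_def S2f_def S3f_def E3_def cof_def
  by algebra

lemma eta0_S: "eta0 X Y Z = S0f X Y Z"
  by (simp add: eta0_def eta_expand)

lemma eta12_S: "eta1 X Y Z + eta2 X Y Z = -1/4 * S0f X Y Z - 3/4 * S2f X Y Z"
proof -
  have a: "(sqrt 3 / 2) ^ 2 = (3/4::real)" by (simp add: power_divide)
  show ?thesis unfolding eta1_def eta2_def eta_expand
    by (simp add: cos_120 sin_120 cos_120' sin_120' a power3_eq_cube algebra_simps)
qed

lemma S2_eta: "S2f X Y Z = -(4/3) * (eta1 X Y Z + eta2 X Y Z) - 1/3 * eta0 X Y Z"
  unfolding eta12_S eta0_S by (simp add: algebra_simps)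

definition Kf :: "form3 \<Rightarrow> vec6 \<Rightarrow> vec6 \<Rightarrow> vec6" where
  "Kf \<rho> X Y = - (Jmat *v (\<chi> i. \<rho> X Y (axis i 1)))"

definition trf :: "(vec6 \<Rightarrow> vec6) \<Rightarrow> real" where
  "trf f = (\<Sum>i\<in>UNIV. f (axis i 1) $ i)"

lemma Jmat_mult: "Jmat *v X = (\<chi> i. if i = 1 then - X$2 else if i = 2 then X$1 else if i = 3 then - X$4 else if i = 4 then X$3 else if i = 5 then - X$6 else X$5)"
  unfolding vec_eq_iff forall_6
  by (simp add: Jmat_def matrix_vector_mult_def sum_6)

lemma axis_comp: "axis i (1::real) $ j = (if j = i then 1 else 0)"
  by (simp add: axis_def)

lemma sigma_K0: "sigma (Kf S0f X Y) W = S0f X Y W"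
  unfolding Kf_def Jmat_mult sigma_def S0f_def
  by (simp add: E3_def e2_def wedge2_def cof_def axis_comp algebra_simps)

lemma sigma_K2: "sigma (Kf S2f X Y) W = S2f X Y W"
  unfolding Kf_def Jmat_mult sigma_def S2f_def
  by (simp add: E3_def e2_def wedge2_def cof_def axis_comp algebra_simps)

lemma sigma_nondeg:
  assumes "\<And>W. sigma V W = sigma V' W" shows "V = V'"
proof -
  have "\<forall>i. V$i = V'$i" unfolding forall_6
    using assms[of "axis 1 1"] assms[of "axis 2 1"] assms[of "axis 3 1"]
      assms[of "axis 4 1"] assms[of "axis 5 1"] assms[of "axis 6 1"]
    by (simp add: sigma_def e2_def wedge2_def cof_def axis_comp)
  then show ?thesis by (simp add: vec_eq_iff)
qed

lemma trf_trace: "trf (\<lambda>Y. A *v Y) = trace A"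
  unfolding trf_def trace_def matrix_vector_mult_def
  by (simp add: axis_comp if_distrib cong: if_cong)

lemma trf_conj:
  fixes g h :: "real^6^6"
  assumes lf: "linear f" and hg: "h ** g = mat 1"
  shows "trf (\<lambda>Y. g *v f (h *v Y)) = trf f"
proof -
  let ?M = "matrix f"
  have f: "f = (\<lambda>x. ?M *v x)" using lf by simp
  have "(\<lambda>Y. g *v f (h *v Y)) = (\<lambda>Y. (g ** ?M ** h) *v Y)"
    by (subst f) (simp add: matrix_vector_mul_assoc matrix_mul_assoc)
  then have "trf (\<lambda>Y. g *v f (h *v Y)) = trace (g ** ?M ** h)" by (simp add: trf_trace)
  also have "\<dots> = trace (h ** (g ** ?M))" by (rule trace_mul_sym)
  also have "\<dots> = trace ?M" by (simp add: matrix_mul_assoc hg)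
  also have "\<dots> = trf f" by (subst (2) f) (simp add: trf_trace)
  finally show ?thesis .
qed

lemma K_equiv:
  fixes g h :: "real^6^6"
  assumes gh: "g ** h = mat 1"
    and sg: "\<And>X Y. sigma (g *v X) (g *v Y) = sigma X Y"
    and rg: "\<And>X Y Z. \<rho> (g *v X) (g *v Y) (g *v Z) = \<rho> X Y Z"
    and sK: "\<And>X Y W. sigma (Kf \<rho> X Y) W = \<rho> X Y W"
  shows "Kf \<rho> (g *v X) (g *v Y) = g *v Kf \<rho> X Y"
proof (rule sigma_nondeg)
  fix W
  have W: "W = g *v (h *v W)" by (simp add: matrix_vector_mul_assoc gh)
  have "sigma (Kf \<rho> (g *v X) (g *v Y)) W = \<rho> (g *v X) (g *v Y) (g *v (h *v W))"
    using sK W by metis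
  also have "\<dots> = \<rho> X Y (h *v W)" by (rule rg)
  also have "\<dots> = sigma (Kf \<rho> X Y) (h *v W)" by (simp add: sK)
  also have "\<dots> = sigma (g *v Kf \<rho> X Y) (g *v (h *v W))" by (simp add: sg)
  also have "\<dots> = sigma (g *v Kf \<rho> X Y) W" using W by metis
  finally show "sigma (Kf \<rho> (g *v X) (g *v Y)) W = sigma (g *v Kf \<rho> X Y) W" .
qed

lemma lin_K0: "linear (Kf S0f X)"
  by (rule linearI) (simp_all add: vec_eq_iff forall_6 Kf_def Jmat_mult S0f_def E3_def axis_comp algebra_simps)
lemma lin_K2: "linear (Kf S2f X)"
  by (rule linearI) (simp_all add: vec_eq_iff forall_6 Kf_def Jmat_mult S2f_def E3_def axis_comp algebra_simps)
lemma lin_K2': "linear (\<lambda>Y. Kf S2f Y Z)"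
  by (rule linearI) (simp_all add: vec_eq_iff forall_6 Kf_def Jmat_mult S2f_def E3_def axis_comp algebra_simps)

lemma trace_metric:
  "trf (\<lambda>Y. Kf S2f X (Kf S2f Y Z)) - 2 * trf (\<lambda>Y. Kf S0f X (Kf S2f Y Z)) = 4 * (X \<bullet> Z)"
  unfolding trf_def sum_6 Kf_def Jmat_mult S0f_def S2f_def inner_vec_def
  by (simp add: E3_def axis_comp algebra_simps)

lemma SO3_D:
  assumes "g \<in> SO3"
  shows "\<exists>h. g ** h = mat 1 \<and> h ** g = mat 1"
    and "\<And>X Y. sigma (g *v X) (g *v Y) = sigma X Y"
    and "\<And>X Y Z. S0f (g *v X) (g *v Y) (g *v Z) = S0f X Y Z"
    and "\<And>X Y Z. S2f (g *v X) (g *v Y) (g *v Z) = S2f X Y Z"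
  using assms unfolding SO3_def invertible_def
  by (auto simp: S2_eta simp flip: eta0_S)

lemma conj_fun:
  fixes g h :: "real^6^6"
  assumes gh: "g ** h = mat 1"
    and sg: "\<And>X Y. sigma (g *v X) (g *v Y) = sigma X Y"
    and r1: "\<And>X Y Z. \<rho> (g *v X) (g *v Y) (g *v Z) = \<rho> X Y Z"
    and sK1: "\<And>X Y W. sigma (Kf \<rho> X Y) W = \<rho> X Y W"
    and r2: "\<And>X Y Z. \<rho>' (g *v X) (g *v Y) (g *v Z) = \<rho>' X Y Z"
    and sK2: "\<And>X Y W. sigma (Kf \<rho>' X Y) W = \<rho>' X Y W"
  shows "(\<lambda>Y. Kf \<rho> (g *v X) (Kf \<rho>' Y (g *v Z))) = (\<lambda>Y. g *v Kf \<rho> X (Kf \<rho>' (h *v Y) Z))"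
proof
  fix Y
  have Y: "Y = g *v (h *v Y)" by (simp add: matrix_vector_mul_assoc gh)
  have "Kf \<rho>' Y (g *v Z) = g *v Kf \<rho>' (h *v Y) Z"
    using K_equiv[OF gh sg r2 sK2, of "h *v Y" Z] Y by metis
  then show "Kf \<rho> (g *v X) (Kf \<rho>' Y (g *v Z)) = g *v Kf \<rho> X (Kf \<rho>' (h *v Y) Z)"
    using K_equiv[OF gh sg r1 sK1] by simp
qed

lemma orth:
  fixes g h :: "real^6^6"
  assumes gh: "g ** h = mat 1" and hg: "h ** g = mat 1"
    and sg: "\<And>X Y. sigma (g *v X) (g *v Y) = sigma X Y"
    and s0: "\<And>X Y Z. S0f (g *v X) (g *v Y) (g *v Z) = S0f X Y Z"
    and s2: "\<And>X Y Z. S2f (g *v X) (g *v Y) (g *v Z) = S2f X Y Z"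
  shows "(g *v X) \<bullet> (g *v Z) = X \<bullet> Z"
proof -
  have l22: "linear (\<lambda>Y. Kf S2f X (Kf S2f Y Z))"
    using linear_compose[OF lin_K2' lin_K2] by (simp add: o_def)
  have l02: "linear (\<lambda>Y. Kf S0f X (Kf S2f Y Z))"
    using linear_compose[OF lin_K2' lin_K0] by (simp add: o_def)
  have "4 * ((g *v X) \<bullet> (g *v Z)) = trf (\<lambda>Y. Kf S2f (g *v X) (Kf S2f Y (g *v Z))) - 2 * trf (\<lambda>Y. Kf S0f (g *v X) (Kf S2f Y (g *v Z)))"
    by (simp add: trace_metric)
  also have "\<dots> = trf (\<lambda>Y. g *v Kf S2f X (Kf S2f (h *v Y) Z)) - 2 * trf (\<lambda>Y. g *v Kf S0f X (Kf S2f (h *v Y) Z))"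
    by (simp add: conj_fun[OF gh sg s2 sigma_K2 s2 sigma_K2] conj_fun[OF gh sg s0 sigma_K0 s2 sigma_K2])
  also have "\<dots> = trf (\<lambda>Y. Kf S2f X (Kf S2f Y Z)) - 2 * trf (\<lambda>Y. Kf S0f X (Kf S2f Y Z))"
    using trf_conj[OF l22 hg] trf_conj[OF l02 hg] by simp
  also have "\<dots> = 4 * (X \<bullet> Z)" by (rule trace_metric)
  finally show ?thesis by simp
qed

lemma sigma_J: "sigma X Y = (Jmat *v X) \<bullet> Y"
  unfolding Jmat_mult sigma_def inner_vec_def sum_6
  by (simp add: e2_def wedge2_def cof_def algebra_simps)

lemma inner_ext: fixes a b :: vec6 assumes "\<And>W. a \<bullet> W = b \<bullet> W" shows "a = b"
proof -
  have "(a - b) \<bullet> (a - b) = 0" using assms[of "a - b"] by (simp add: inner_diff_left)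
  then show ?thesis by simp
qed

lemma J_comm:
  fixes g h :: "real^6^6"
  assumes gh: "g ** h = mat 1"
    and sg: "\<And>X Y. sigma (g *v X) (g *v Y) = sigma X Y"
    and og: "\<And>X Z. (g *v X) \<bullet> (g *v Z) = X \<bullet> Z"
  shows "Jmat *v (g *v X) = g *v (Jmat *v X)"
proof (rule inner_ext)
  fix W
  have W: "W = g *v (h *v W)" by (simp add: matrix_vector_mul_assoc gh)
  have "(Jmat *v (g *v X)) \<bullet> W = sigma (g *v X) (g *v (h *v W))" using W sigma_J by metis
  also have "\<dots> = (Jmat *v X) \<bullet> (h *v W)" using sg[of X "h *v W"] by (simp add: sigma_J)
  also have "\<dots> = (g *v (Jmat *v X)) \<bullet> (g *v (h *v W))" by (simp add: og)
  also have "\<dots> = (g *v (Jmat *v X)) \<bullet> W" using W by metis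
  finally show "(Jmat *v (g *v X)) \<bullet> W = (g *v (Jmat *v X)) \<bullet> W" .
qed

definition Phi :: "real \<Rightarrow> real \<Rightarrow> real \<Rightarrow> real \<Rightarrow> real \<Rightarrow> form3" where
  "Phi x1 x2 y1 y2 y3 X Y Z =
     x1*y1 * S0f X Y (Jmat *v Z) + x1*y2 * S0f X Y Z
   + x1*y3 * (- S0f X (Jmat *v Y) Z - S0f (Jmat *v X) Y Z - S0f (Jmat *v X) (Jmat *v Y) (Jmat *v Z))
   + x2*y1 * (- S0f X Y Z - S0f X (Jmat *v Y) (Jmat *v Z) - S0f (Jmat *v X) Y (Jmat *v Z))
   + x2*y2 * S0f (Jmat *v X) (Jmat *v Y) (Jmat *v Z) + x2*y3 * S0f (Jmat *v X) (Jmat *v Y) Z"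

lemma B_Phi: "(bracket_of (struct_d x1 x2 y1 y2 y3) X Y) \<bullet> Z = Phi x1 x2 y1 y2 y3 X Y Z"
  unfolding Phi_def Jmat_mult S0f_def inner_vec_def sum_6
  apply (simp add: SD E3_def)
  by algebra

lemma mvneg: "(A::real^6^6) *v (- V) = - (A *v V)"
  by (simp add: matrix_vector_mult_def vec_eq_iff sum_negf)

lemma matrix_inv_SO3:
  assumes "g \<in> SO3" shows "g ** matrix_inv g = mat 1 \<and> matrix_inv g ** g = mat 1"
  using SO3_D(1)[OF assms] unfolding matrix_inv_def by (rule someI_ex)

lemma SO3_invariant:
  assumes g: "g \<in> SO3"
  shows "act_tensor g (flat_torsion (bracket_of (struct_d x1 x2 y1 y2 y3))) = flat_torsion (bracket_of (struct_d x1 x2 y1 y2 y3))"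
proof -
  let ?B = "bracket_of (struct_d x1 x2 y1 y2 y3)"
  let ?h = "matrix_inv g"
  have gh: "g ** ?h = mat 1" and hg: "?h ** g = mat 1" using matrix_inv_SO3[OF g] by auto
  note sg = SO3_D(2)[OF g] and s0 = SO3_D(3)[OF g] and s2 = SO3_D(4)[OF g]
  have og: "\<And>X Z. (g *v X) \<bullet> (g *v Z) = X \<bullet> Z" by (rule orth[OF gh hg sg s0 s2])
  have Jg: "\<And>X. Jmat *v (g *v X) = g *v (Jmat *v X)" by (rule J_comm[OF gh sg og])
  have ghv: "\<And>X. g *v (?h *v X) = X" by (simp add: matrix_vector_mul_assoc gh)
  have hgv: "\<And>X. ?h *v (g *v X) = X" by (simp add: matrix_vector_mul_assoc hg)
  have Jh: "\<And>X. Jmat *v (?h *v X) = ?h *v (Jmat *v X)"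
    by (metis Jg ghv hgv)
  have s0h: "\<And>X Y Z. S0f (?h *v X) (?h *v Y) (?h *v Z) = S0f X Y Z"
    by (metis s0 ghv)
  have Phih: "\<And>X Y Z. Phi x1 x2 y1 y2 y3 (?h *v X) (?h *v Y) (?h *v Z) = Phi x1 x2 y1 y2 y3 X Y Z"
    unfolding Phi_def by (simp add: Jh s0h)
  have gin: "\<And>V W. (g *v V) \<bullet> W = V \<bullet> (?h *v W)" by (metis og ghv)
  show ?thesis
  proof (intro ext)
    fix X Y
    show "act_tensor g (flat_torsion ?B) X Y = flat_torsion ?B X Y"
    proof (rule inner_ext)
      fix W
      have "act_tensor g (flat_torsion ?B) X Y \<bullet> W = - ((?B (?h *v X) (?h *v Y)) \<bullet> (?h *v W))"
        by (simp add: act_tensor_def flat_torsion_def gin mvneg)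
      also have "\<dots> = - Phi x1 x2 y1 y2 y3 X Y W" by (simp add: B_Phi Phih)
      also have "\<dots> = flat_torsion ?B X Y \<bullet> W" by (simp add: flat_torsion_def B_Phi)
      finally show "act_tensor g (flat_torsion ?B) X Y \<bullet> W = flat_torsion ?B X Y \<bullet> W" .
    qed
  qed
qed

lemma d3_lin: "d3 B (\<lambda>X Y Z. a * P X Y Z + b * Q X Y Z + c * R X Y Z + d * T X Y Z) X0 X1 X2 X3
   = a * d3 B P X0 X1 X2 X3 + b * d3 B Q X0 X1 X2 X3 + c * d3 B R X0 X1 X2 X3 + d * d3 B T X0 X1 X2 X3"
  unfolding d3_def by (simp add: algebra_simps)

lemma s3cube: "(sqrt 3 / 2) ^ 3 = 3 * sqrt 3 / (8::real)"
  by (simp add: power3_eq_cube power_divide)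

lemma eta1_fun: "eta1 = (\<lambda>X Y Z. (-1/8) * S0f X Y Z + (sqrt 3/8) * S1f X Y Z + (-3/8) * S2f X Y Z + (3 * sqrt 3/8) * S3f X Y Z)"
proof -
  have a: "(sqrt 3 / 2) ^ 2 = (3/4::real)" by (simp add: power_divide)
  show ?thesis unfolding eta1_def by (intro ext) (simp add: eta_expand cos_120 sin_120 cos_120' sin_120' a s3cube power3_eq_cube power2_eq_square algebra_simps)
qed

lemma eta2_fun: "eta2 = (\<lambda>X Y Z. (-1/8) * S0f X Y Z + (-sqrt 3/8) * S1f X Y Z + (-3/8) * S2f X Y Z + (-3 * sqrt 3/8) * S3f X Y Z)"
proof -
  have a: "(sqrt 3 / 2) ^ 2 = (3/4::real)" by (simp add: power_divide)
  show ?thesis unfolding eta2_def by (intro ext) (simp add: eta_expand cos_120 sin_120 cos_120' sin_120' a s3cube power3_eq_cube power2_eq_square algebra_simps)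
qed

lemma eta0_fun: "eta0 = (\<lambda>X Y Z. 1 * S0f X Y Z + 0 * S1f X Y Z + 0 * S2f X Y Z + 0 * S3f X Y Z)"
  by (intro ext) (simp add: eta0_S)

lemma gamma_fun: "gamma X Y Z = S0f X Y Z - S2f X Y Z"
proof -
  have "gamma X Y Z = 4/3 * (eta0 X Y Z + (eta1 X Y Z + eta2 X Y Z))" by (simp add: gamma_def algebra_simps)
  then show ?thesis by (simp add: eta12_S eta0_S algebra_simps)
qed

lemma gammahat_fun: "gammahat = (\<lambda>X Y Z. 0 * S0f X Y Z + 1 * S1f X Y Z + 0 * S2f X Y Z + (-1) * S3f X Y Z)"
  by (intro ext) (simp add: gammahat_def gamma_fun Jmat_mult S0f_def S1f_def S2f_def S3f_def E3_def algebra_simps)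

lemma tS0: "d3 (bracket_of (struct_d x1 x2 y1 y2 y3)) S0f X Y Z W = 1/2 * (x2*y3) * sigma_sq X Y Z W"
  unfolding d3_def S0f_def sigma_sq_def sigma_def
  apply (simp add: SD E3_def) by algebra
lemma tS1: "d3 (bracket_of (struct_d x1 x2 y1 y2 y3)) S1f X Y Z W = -1/2 * (x1*y3 + x2*y2) * sigma_sq X Y Z W"
  unfolding d3_def S1f_def sigma_sq_def sigma_def
  apply (simp add: SD E3_def) by algebra
lemma tS2: "d3 (bracket_of (struct_d x1 x2 y1 y2 y3)) S2f X Y Z W = 1/2 * (x1*y2 + x2*y1) * sigma_sq X Y Z W"
  unfolding d3_def S2f_def sigma_sq_def sigma_def
  apply (simp add: SD E3_def) by algebra
lemma tS3: "d3 (bracket_of (struct_d x1 x2 y1 y2 y3)) S3f X Y Z W = -1/2 * (x1*y1) * sigma_sq X Y Z W"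
  unfolding d3_def S3f_def sigma_sq_def sigma_def
  apply (simp add: SD E3_def) by algebra

lemma tsig4: "4 * d2 (bracket_of (struct_d x1 x2 y1 y2 y3)) sigma X Y Z =
  3 * (x1*y3 + x2*y2 - x1*y1) * (S0f X Y Z - S2f X Y Z) + 3 * (x2*y3 - x1*y2 - x2*y1) * (S1f X Y Z - S3f X Y Z)
        - (x1*y2 + x2*y1 + 3 * (x2*y3)) * (e3 2 3 5 X Y Z + e3 1 4 5 X Y Z + e3 1 3 6 X Y Z + 3 * e3 2 4 6 X Y Z)
        - (3 * (x1*y1) + (x1*y3 + x2*y2)) * (e3 2 4 5 X Y Z + e3 1 4 6 X Y Z + e3 2 3 6 X Y Z + 3 * e3 1 3 5 X Y Z)"
  unfolding d2_def S0f_def S1f_def S2f_def S3f_def sigma_def e3_def wedge3_def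
  apply (simp add: SD E3_def)
  by algebra
lemma tsig: "d2 (bracket_of (struct_d x1 x2 y1 y2 y3)) sigma X Y Z = (
  3 * (x1*y3 + x2*y2 - x1*y1) * (S0f X Y Z - S2f X Y Z) + 3 * (x2*y3 - x1*y2 - x2*y1) * (S1f X Y Z - S3f X Y Z)
        - (x1*y2 + x2*y1 + 3 * (x2*y3)) * (e3 2 3 5 X Y Z + e3 1 4 5 X Y Z + e3 1 3 6 X Y Z + 3 * e3 2 4 6 X Y Z)
        - (3 * (x1*y1) + (x1*y3 + x2*y2)) * (e3 2 4 5 X Y Z + e3 1 4 6 X Y Z + e3 2 3 6 X Y Z + 3 * e3 1 3 5 X Y Z)) / 4"
  unfolding tsig4[of x1 x2 y1 y2 y3 X Y Z, symmetric] by simp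

lemma torsion:
  "torsion_cubic (bracket_of (struct_d x1 x2 y1 y2 y3)) (-1 * (x1*y1)) (-1 * (x1*y2 + x2*y1)) (-1 * (x1*y3 + x2*y2)) (-1 * (x2*y3))"
  unfolding torsion_cubic_def
  apply (intro conjI ext)
  apply (simp only: eta0_fun d3_lin tS0 tS1 tS2 tS3, simp add: algebra_simps)
  apply (simp only: eta1_fun d3_lin tS0 tS1 tS2 tS3, simp add: algebra_simps)
  apply (simp only: eta2_fun d3_lin tS0 tS1 tS2 tS3, simp add: algebra_simps)
  apply (simp only: gammahat_fun d3_lin tS0 tS1 tS2 tS3, simp add: algebra_simps)
  apply (simp only: tsig gamma_fun gammahat_fun, simp add: field_simps)
  done

lemma jacobi:
  fixes X Y Z :: vec6 and x1 x2 y1 y2 y3 :: real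
  shows "bracket_of (struct_d x1 x2 y1 y2 y3) X (bracket_of (struct_d x1 x2 y1 y2 y3) Y Z)
       + bracket_of (struct_d x1 x2 y1 y2 y3) Y (bracket_of (struct_d x1 x2 y1 y2 y3) Z X)
       + bracket_of (struct_d x1 x2 y1 y2 y3) Z (bracket_of (struct_d x1 x2 y1 y2 y3) X Y) = 0"
  unfolding vec_eq_iff forall_6
  apply (simp add: SD)
  apply (intro conjI)
  by algebra+

lemma bilin: "bilinear (bracket_of (struct_d x1 x2 y1 y2 y3))"
  unfolding bilinear_def
  apply (intro conjI allI linearI)
  by (simp_all add: vec_eq_iff forall_6 SD algebra_simps)

lemma alt: "bracket_of (struct_d x1 x2 y1 y2 y3) X X = 0"
  by (simp add: vec_eq_iff SD)

lemma nonab: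
  assumes x: "(x1, x2) \<noteq> (0::real, 0)" and y: "(y1, y2, y3) \<noteq> (0::real, 0, 0)"
  shows "non_abelian (bracket_of (struct_d x1 x2 y1 y2 y3))"
proof (rule ccontr)
  assume "\<not> non_abelian (bracket_of (struct_d x1 x2 y1 y2 y3))"
  then have z: "\<And>X Y. bracket_of (struct_d x1 x2 y1 y2 y3) X Y = 0" unfolding non_abelian_def by blast
  have c1: "bracket_of (struct_d x1 x2 y1 y2 y3) (axis 3 1) (axis 5 1) $ 2 = 0"
   and c2: "bracket_of (struct_d x1 x2 y1 y2 y3) (axis 3 1) (axis 5 1) $ 1 = 0"
   and c3: "bracket_of (struct_d x1 x2 y1 y2 y3) (axis 4 1) (axis 6 1) $ 1 = 0"
   and c4: "bracket_of (struct_d x1 x2 y1 y2 y3) (axis 3 1) (axis 6 1) $ 1 = 0"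
   and c5: "bracket_of (struct_d x1 x2 y1 y2 y3) (axis 4 1) (axis 6 1) $ 2 = 0"
   and c6: "bracket_of (struct_d x1 x2 y1 y2 y3) (axis 3 1) (axis 6 1) $ 2 = 0"
    by (simp_all add: z)
  have F: "x1*y1 = 0" "x2*y1 - x1*y2 = 0" "x2*y3 = 0" "x1*y3 = 0" "x1*y3 - y2*x2 = 0" "x2*y1 = 0"
    using c1 apply (simp add: SD axis_comp)
    using c2 apply (simp add: SD axis_comp)
    using c3 apply (simp add: SD axis_comp)
    using c4 apply (simp add: SD axis_comp)
    using c5 apply (simp add: SD axis_comp)
    using c6 apply (simp add: SD axis_comp)
    done
  have "y2*x2 = x2*y2" by simp
  then have "x1*y1 = 0" "x1*y2 = 0" "x1*y3 = 0" "x2*y1 = 0" "x2*y2 = 0" "x2*y3 = 0"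
    using F by linarith+
  then show False using x y by auto
qed

lemma cubic_root: "\<exists>r::real. r^3 + a*r^2 + b*r + c = 0"
proof -
  define M where "M = 1 + \<bar>a\<bar> + \<bar>b\<bar> + \<bar>c\<bar>"
  have M1: "M \<ge> 1" unfolding M_def by simp
  have M2: "M \<le> M^2" using M1 by (simp add: power2_eq_square)
  have M3: "1 \<le> M^2" using M1 M2 by linarith
  have bnd: "\<bar>a*r^2 + b*r + c\<bar> \<le> (M - 1) * M^2" if "\<bar>r\<bar> = M" for r
  proof -
    have "\<bar>a*r^2 + b*r + c\<bar> \<le> \<bar>a\<bar>*M^2 + \<bar>b\<bar>*M + \<bar>c\<bar>"
    proof -
      have t: "\<bar>a*r^2+b*r+c\<bar> \<le> \<bar>a*r^2\<bar> + \<bar>b*r\<bar> + \<bar>c\<bar>"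
        using abs_triangle_ineq[of "a*r^2+b*r" c] abs_triangle_ineq[of "a*r^2" "b*r"] by linarith
      have "\<bar>a*r^2\<bar> = \<bar>a\<bar>*M^2" "\<bar>b*r\<bar> = \<bar>b\<bar>*M" using that by (simp_all add: abs_mult power_abs)
      then show ?thesis using t by simp
    qed
    also have "\<dots> \<le> \<bar>a\<bar>*M^2 + \<bar>b\<bar>*M^2 + \<bar>c\<bar>*M^2"
      using mult_left_mono[OF M2, of "\<bar>b\<bar>"] mult_left_mono[OF M3, of "\<bar>c\<bar>"] by auto
    also have "\<dots> = (M - 1) * M^2" unfolding M_def by (simp add: algebra_simps)
    finally show ?thesis .
  qed
  let ?q = "\<lambda>r::real. r^3 + a*r^2 + b*r + c"
  have "?q M \<ge> M^3 - (M - 1) * M^2" using bnd[of M] M1 by auto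
  moreover have "M^3 - (M - 1) * M^2 = M^2" by (simp add: power2_eq_square power3_eq_cube algebra_simps)
  ultimately have p: "?q M \<ge> 0" using M3 by linarith
  have "?q (-M) \<le> (M - 1) * M^2 - M^3" using bnd[of "-M"] M1 by auto
  moreover have "(M - 1) * M^2 - M^3 = - (M^2)" by (simp add: power2_eq_square power3_eq_cube algebra_simps)
  ultimately have n: "?q (-M) \<le> 0" using M3 by linarith
  have "\<exists>r. -M \<le> r \<and> r \<le> M \<and> ?q r = 0"
    by (rule IVT) (use p n M1 in \<open>auto intro!: continuous_intros\<close>)
  then show ?thesis by blast
qed

lemma cubic_prod: "cubic_form (x1*y1) (x1*y2 + x2*y1) (x1*y3 + x2*y2) (x2*y3) u1 u2 = lin_form x1 x2 u1 u2 * quad_form y1 y2 y3 u1 u2"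
  unfolding cubic_form_def lin_form_def quad_form_def by (simp add: power2_eq_square power3_eq_cube algebra_simps)

lemma zero_delta: "(\<lambda>X Y. (0::vec6)) \<in> delta_image"
proof -
  have "(0::real^6^6) \<in> so3"
    unfolding so3_def by (simp add: matrix_vector_mult_def sigma_def e2_def wedge2_def cof_def
        eta0_def eta1_def eta2_def eta_def wedge3_def)
  moreover have "linear (\<lambda>X::vec6. (0::real^6^6))" by (rule linear_zero)
  ultimately show ?thesis unfolding delta_image_def
    by (intro CollectI exI[of _ "\<lambda>X. 0"]) (simp add: matrix_vector_mult_def)
qed

lemma prod_nz:
  assumes x: "(x1, x2) \<noteq> (0::real, 0)" and y: "(y1, y2, y3) \<noteq> (0::real, 0, 0)"
  shows "prod_coeffs x1 x2 y1 y2 y3 \<noteq> (0, 0, 0, 0)"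
proof
  assume "prod_coeffs x1 x2 y1 y2 y3 = (0, 0, 0, 0)"
  then have a: "x1*y1 = 0" "x1*y2 + x2*y1 = 0" "x1*y3 + x2*y2 = 0" "x2*y3 = 0"
    by (simp_all add: prod_coeffs_def)
  show False
  proof (cases "x1 = 0")
    case True
    then have "x2 \<noteq> 0" using x by auto
    then show False using a y True by auto
  next
    case False
    then have "y1 = 0" using a by auto
    then have "y2 = 0" using a False by auto
    then have "y3 = 0" using a False by auto
    then show False using y \<open>y1 = 0\<close> \<open>y2 = 0\<close> by auto
  qed
qed

lemma surj_cubic:
  assumes "(l1, l2, l3, l4) \<noteq> (0::real, 0, 0, 0)"
  shows "\<exists>x1 x2 y1 y2 y3 t. (x1, x2) \<noteq> (0, 0) \<and> (y1, y2, y3) \<noteq> (0, 0, 0) \<and> t \<noteq> 0 \<and>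
          (l1, l2, l3, l4) = (\<lambda>(a, b, c, d). (t * a, t * b, t * c, t * d)) (prod_coeffs x1 x2 y1 y2 y3)"
proof (cases "l1 = 0")
  case True
  then have "(l2, l3, l4) \<noteq> (0, 0, 0)" using assms by auto
  then show ?thesis using True
    by (intro exI[of _ 0] exI[of _ 1] exI[of _ l2] exI[of _ l3] exI[of _ l4] exI[of _ 1])
       (simp add: prod_coeffs_def)
next
  case False
  obtain r where r: "r^3 + (l2/l1)*r^2 + (l3/l1)*r + l4/l1 = 0" using cubic_root by blast
  have r': "l1*r^3 + l2*r^2 + l3*r + l4 = 0"
  proof -
    have "l1*r^3 + l2*r^2 + l3*r + l4 = l1 * (r^3 + (l2/l1)*r^2 + (l3/l1)*r + l4/l1)"
      using False by (simp add: field_simps)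
    then show ?thesis using r by simp
  qed
  have "l4 = - r * (l3 + r*l2 + r^2*l1)" using r' by (simp add: power2_eq_square power3_eq_cube algebra_simps)
  then show ?thesis using False
    by (intro exI[of _ 1] exI[of _ "-r"] exI[of _ l1] exI[of _ "l2 + r*l1"] exI[of _ "l3 + r*l2 + r^2*l1"] exI[of _ 1])
       (simp add: prod_coeffs_def power2_eq_square algebra_simps)
qed

theorem proposition3p10:
  shows
   "(\<forall>x1 x2 y1 y2 y3 :: real. (x1, x2) \<noteq> (0, 0) \<and> (y1, y2, y3) \<noteq> (0, 0, 0) \<longrightarrow>
      (let B = bracket_of (struct_d x1 x2 y1 y2 y3) in
         (\<forall>k. d1 B (cof k) = struct_d x1 x2 y1 y2 y3 k) \<and>
         is_lie_bracket B \<and> non_abelian B \<and>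
         SO3_invariant_tensor (flat_torsion B) \<and>
         intrinsic_torsion_invariant B \<and>
         (\<exists>t. t \<noteq> 0 \<and>
            torsion_cubic B (t * (x1*y1)) (t * (x1*y2 + x2*y1)) (t * (x1*y3 + x2*y2)) (t * (x2*y3)))))
    \<and>
    (\<forall>x1 x2 y1 y2 y3 :: real. (x1, x2) \<noteq> (0, 0) \<and> (y1, y2, y3) \<noteq> (0, 0, 0) \<longrightarrow>
       prod_coeffs x1 x2 y1 y2 y3 \<noteq> (0, 0, 0, 0))
    \<and>
    (\<forall>l1 l2 l3 l4 :: real. (l1, l2, l3, l4) \<noteq> (0, 0, 0, 0) \<longrightarrow>
       (\<exists>x1 x2 y1 y2 y3 t. (x1, x2) \<noteq> (0, 0) \<and> (y1, y2, y3) \<noteq> (0, 0, 0) \<and> t \<noteq> 0 \<and>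
          (l1, l2, l3, l4) = (\<lambda>(a, b, c, d). (t * a, t * b, t * c, t * d)) (prod_coeffs x1 x2 y1 y2 y3)))
    \<and>
    (\<forall>a b c d :: real. a * d - b * c = 1 \<longrightarrow>
       (\<forall>x1 x2 y1 y2 y3 x1' x2' y1' y2' y3'.
          (\<forall>u1 u2. lin_form x1' x2' u1 u2 = lin_form x1 x2 (a*u1 + b*u2) (c*u1 + d*u2)) \<and>
          (\<forall>u1 u2. quad_form y1' y2' y3' u1 u2 = quad_form y1 y2 y3 (a*u1 + b*u2) (c*u1 + d*u2)) \<longrightarrow>
          (\<forall>u1 u2. (case prod_coeffs x1' x2' y1' y2' y3' of (l1, l2, l3, l4) \<Rightarrow> cubic_form l1 l2 l3 l4 u1 u2)
                 = (case prod_coeffs x1 x2 y1 y2 y3 of (l1, l2, l3, l4) \<Rightarrow>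
                      cubic_form l1 l2 l3 l4 (a*u1 + b*u2) (c*u1 + d*u2)))))"
proof (intro conjI)
  show "\<forall>x1 x2 y1 y2 y3 :: real. (x1, x2) \<noteq> (0, 0) \<and> (y1, y2, y3) \<noteq> (0, 0, 0) \<longrightarrow>
      (let B = bracket_of (struct_d x1 x2 y1 y2 y3) in
         (\<forall>k. d1 B (cof k) = struct_d x1 x2 y1 y2 y3 k) \<and>
         is_lie_bracket B \<and> non_abelian B \<and>
         SO3_invariant_tensor (flat_torsion B) \<and>
         intrinsic_torsion_invariant B \<and>
         (\<exists>t. t \<noteq> 0 \<and>
            torsion_cubic B (t * (x1*y1)) (t * (x1*y2 + x2*y1)) (t * (x1*y3 + x2*y2)) (t * (x2*y3))))"
  proof (intro allI impI)
    fix x1 x2 y1 y2 y3 :: real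
    assume xy: "(x1, x2) \<noteq> (0, 0) \<and> (y1, y2, y3) \<noteq> (0, 0, 0)"
    let ?B = "bracket_of (struct_d x1 x2 y1 y2 y3)"
    have d1: "\<forall>k. d1 ?B (cof k) = struct_d x1 x2 y1 y2 y3 k"
      by (intro allI ext) (simp add: d1_def cof_def bracket_of_def)
    have lie: "is_lie_bracket ?B"
      unfolding is_lie_bracket_def using bilin alt jacobi by blast
    have inv: "SO3_invariant_tensor (flat_torsion ?B)"
      unfolding SO3_invariant_tensor_def using SO3_invariant by blast
    have iti: "intrinsic_torsion_invariant ?B"
      unfolding intrinsic_torsion_invariant_def
      using SO3_invariant zero_delta by simp
    show "let B = ?B in
         (\<forall>k. d1 B (cof k) = struct_d x1 x2 y1 y2 y3 k) \<and>
         is_lie_bracket B \<and> non_abelian B \<and>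
         SO3_invariant_tensor (flat_torsion B) \<and>
         intrinsic_torsion_invariant B \<and>
         (\<exists>t. t \<noteq> 0 \<and>
            torsion_cubic B (t * (x1*y1)) (t * (x1*y2 + x2*y1)) (t * (x1*y3 + x2*y2)) (t * (x2*y3)))"
      unfolding Let_def using d1 lie nonab[of x1 x2 y1 y2 y3] xy inv iti torsion[of x1 x2 y1 y2 y3]
      by (intro conjI exI[of _ "-1"]) auto
  qed
next
  show "\<forall>x1 x2 y1 y2 y3 :: real. (x1, x2) \<noteq> (0, 0) \<and> (y1, y2, y3) \<noteq> (0, 0, 0) \<longrightarrow>
       prod_coeffs x1 x2 y1 y2 y3 \<noteq> (0, 0, 0, 0)"
    using prod_nz by blast
next
  show "\<forall>l1 l2 l3 l4 :: real. (l1, l2, l3, l4) \<noteq> (0, 0, 0, 0) \<longrightarrow>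
       (\<exists>x1 x2 y1 y2 y3 t. (x1, x2) \<noteq> (0, 0) \<and> (y1, y2, y3) \<noteq> (0, 0, 0) \<and> t \<noteq> 0 \<and>
          (l1, l2, l3, l4) = (\<lambda>(a, b, c, d). (t * a, t * b, t * c, t * d)) (prod_coeffs x1 x2 y1 y2 y3))"
    using surj_cubic by blast
next
  show "\<forall>a b c d :: real. a * d - b * c = 1 \<longrightarrow>
       (\<forall>x1 x2 y1 y2 y3 x1' x2' y1' y2' y3'.
          (\<forall>u1 u2. lin_form x1' x2' u1 u2 = lin_form x1 x2 (a*u1 + b*u2) (c*u1 + d*u2)) \<and>
          (\<forall>u1 u2. quad_form y1' y2' y3' u1 u2 = quad_form y1 y2 y3 (a*u1 + b*u2) (c*u1 + d*u2)) \<longrightarrow>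
          (\<forall>u1 u2. (case prod_coeffs x1' x2' y1' y2' y3' of (l1, l2, l3, l4) \<Rightarrow> cubic_form l1 l2 l3 l4 u1 u2)
                 = (case prod_coeffs x1 x2 y1 y2 y3 of (l1, l2, l3, l4) \<Rightarrow>
                      cubic_form l1 l2 l3 l4 (a*u1 + b*u2) (c*u1 + d*u2))))"
    by (simp add: prod_coeffs_def cubic_prod)
qed

end
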